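(* Let $S$ be an inverse semigroup that is a mirror semigroup, with semilattice of idempotents $\Sigma=\Sigma(S)$. Then $S$ is separately Scott-continuous if and only if $\Sigma$ is meet-continuous.
   Context: An inverse semigroup is a semigroup $S$ in which every $s$ has a unique $s^*$ with $ss^*s=s$ and $s^*ss^*=s^*$. $\Sigma(S)$ is the set of idempotents of $S$. The intrinsic order is $s\leqslant t$ iff $s=t\epsilon$ for some idempotent $\epsilon$. A subset of a poset is directed if it is nonempty and any two of its elements have an upper bound in it. $S$ is a mirror semigroup if every directed subset of $\Sigma$ having a supremum in $(\Sigma,\leqslant)$ also has a supremum in $(S,\leqslant)$. $\bigvee A$ denotes the supremum of $A$ in $S$. $S$ is separately Scott-continuous if for every directed subset $D\subseteq S$ that has a supremum and every $s\in S$, $\bigvee(Ds)$ exists and equals $(\bigvee D)s$. $\Sigma$ is meet-continuous if for every directed subset $\Delta\subseteq\Sigma$ having a supremum in $\Sigma$ and every $\epsilon\in\Sigma$, the supremum of $\Delta\epsilon$ in $\Sigma$ exists and equals $(\sup\Delta)\epsilon$ (i.e. the same property as separate Scott-continuity, for the semilattice $\Sigma$). *)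

theory Defs
  imports Main
begin

definition inverse_semigroup :: "('a \<Rightarrow> 'a \<Rightarrow> 'a) \<Rightarrow> bool" where
  "inverse_semigroup m \<longleftrightarrow>
     (\<forall>a b c. m (m a b) c = m a (m b c)) \<and>
     (\<forall>s. \<exists>!t. m (m s t) s = s \<and> m (m t s) t = t)"

definition idems :: "('a \<Rightarrow> 'a \<Rightarrow> 'a) \<Rightarrow> 'a set" where
  "idems m = {e. m e e = e}"

definition intr_le :: "('a \<Rightarrow> 'a \<Rightarrow> 'a) \<Rightarrow> 'a \<Rightarrow> 'a \<Rightarrow> bool" where
  "intr_le m s t \<longleftrightarrow> (\<exists>e\<in>idems m. s = m t e)"

definition directed_by :: "('a \<Rightarrow> 'a \<Rightarrow> bool) \<Rightarrow> 'a set \<Rightarrow> bool" where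
  "directed_by R D \<longleftrightarrow> D \<noteq> {} \<and> (\<forall>x\<in>D. \<forall>y\<in>D. \<exists>z\<in>D. R x z \<and> R y z)"

definition is_sup_in :: "('a \<Rightarrow> 'a \<Rightarrow> bool) \<Rightarrow> 'a set \<Rightarrow> 'a set \<Rightarrow> 'a \<Rightarrow> bool" where
  "is_sup_in R A X x \<longleftrightarrow> x \<in> A \<and> (\<forall>y\<in>X. R y x) \<and> (\<forall>z\<in>A. (\<forall>y\<in>X. R y z) \<longrightarrow> R x z)"

definition mirror_semigroup :: "('a \<Rightarrow> 'a \<Rightarrow> 'a) \<Rightarrow> bool" where
  "mirror_semigroup m \<longleftrightarrow>
     (\<forall>D. D \<subseteq> idems m \<and> directed_by (intr_le m) D \<and> (\<exists>x. is_sup_in (intr_le m) (idems m) D x)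
          \<longrightarrow> (\<exists>x. is_sup_in (intr_le m) UNIV D x))"

definition sep_scott_continuous :: "('a \<Rightarrow> 'a \<Rightarrow> 'a) \<Rightarrow> bool" where
  "sep_scott_continuous m \<longleftrightarrow>
     (\<forall>D x s. directed_by (intr_le m) D \<and> is_sup_in (intr_le m) UNIV D x
          \<longrightarrow> is_sup_in (intr_le m) UNIV ((\<lambda>d. m d s) ` D) (m x s))"

definition meet_continuous :: "('a \<Rightarrow> 'a \<Rightarrow> 'a) \<Rightarrow> bool" where
  "meet_continuous m \<longleftrightarrow>
     (\<forall>\<Delta> x e. \<Delta> \<subseteq> idems m \<and> directed_by (intr_le m) \<Delta> \<and> is_sup_in (intr_le m) (idems m) \<Delta> x
          \<and> e \<in> idems m
          \<longrightarrow> is_sup_in (intr_le m) (idems m) ((\<lambda>d. m d e) ` \<Delta>) (m x e))"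

end

theory Submission
  imports Defs
begin

locale invsg =
  fixes m :: "'a \<Rightarrow> 'a \<Rightarrow> 'a" (infixl "\<cdot>" 70)
  assumes isg: "inverse_semigroup m"
begin

lemma assoc: "(a \<cdot> b) \<cdot> c = a \<cdot> (b \<cdot> c)"
  using isg unfolding inverse_semigroup_def by blast

lemma ex1inv: "\<exists>!t. s \<cdot> t \<cdot> s = s \<and> t \<cdot> s \<cdot> t = t"
  using isg unfolding inverse_semigroup_def by blast

definition iv where "iv s = (THE t. s \<cdot> t \<cdot> s = s \<and> t \<cdot> s \<cdot> t = t)"

lemma iv1: "s \<cdot> iv s \<cdot> s = s" and iv2: "iv s \<cdot> s \<cdot> iv s = iv s"
  using theI'[OF ex1inv[of s]] unfolding iv_def by auto

lemma iv_uniq: "s \<cdot> t \<cdot> s = s \<Longrightarrow> t \<cdot> s \<cdot> t = t \<Longrightarrow> t = iv s"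
  using ex1inv[of s] iv1 iv2 by blast

lemma idem_iv: "e \<cdot> e = e \<Longrightarrow> iv e = e"
  using iv_uniq[of e e] by simp

lemma idem_prod_idem:
  assumes e: "e \<cdot> e = e" and f: "f \<cdot> f = f"
  shows "(e \<cdot> f) \<cdot> (e \<cdot> f) = e \<cdot> f"
proof -
  let ?a = "e \<cdot> f" let ?b = "iv ?a" let ?c = "f \<cdot> ?b \<cdot> e"
  have ee: "e \<cdot> (e \<cdot> z) = e \<cdot> z" for z using e by (metis assoc)
  have ff: "f \<cdot> (f \<cdot> z) = f \<cdot> z" for z using f by (metis assoc)
  have "?a \<cdot> ?c \<cdot> ?a = ?a \<cdot> ?b \<cdot> ?a"
    by (simp add: assoc ee ff)
  hence 1: "?a \<cdot> ?c \<cdot> ?a = ?a" using iv1 by simp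
  have "?c \<cdot> ?a \<cdot> ?c = f \<cdot> (?b \<cdot> ?a \<cdot> ?b) \<cdot> e"
    by (simp add: assoc ee ff)
  hence 2: "?c \<cdot> ?a \<cdot> ?c = ?c" using iv2 by simp
  have cb: "?c = ?b" using iv_uniq[OF 1 2] .
  have "?c \<cdot> ?c = f \<cdot> (?b \<cdot> ?a \<cdot> ?b) \<cdot> e"
    by (simp add: assoc)
  hence bi: "?b \<cdot> ?b = ?b" using iv2 cb by simp
  have "?b \<cdot> ?a \<cdot> ?b = ?b" "?a \<cdot> ?b \<cdot> ?a = ?a" using iv1 iv2 by auto
  hence "?a = iv ?b" using iv_uniq by blast
  hence "?a = ?b" using idem_iv[OF bi] by simp
  thus ?thesis using bi by simp
qed

lemma idem_comm:
  assumes e: "e \<cdot> e = e" and f: "f \<cdot> f = f"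
  shows "e \<cdot> f = f \<cdot> e"
proof -
  have ef: "(e \<cdot> f) \<cdot> (e \<cdot> f) = e \<cdot> f" and fe: "(f \<cdot> e) \<cdot> (f \<cdot> e) = f \<cdot> e"
    using idem_prod_idem e f by auto
  have 1: "(e \<cdot> f) \<cdot> (f \<cdot> e) \<cdot> (e \<cdot> f) = e \<cdot> f"
    by (metis assoc e ef f)
  have 2: "(f \<cdot> e) \<cdot> (e \<cdot> f) \<cdot> (f \<cdot> e) = f \<cdot> e"
    by (metis assoc e fe f)
  have "f \<cdot> e = iv (e \<cdot> f)" using iv_uniq[OF 1 2] .
  thus ?thesis using idem_iv[OF ef] by simp
qed

lemma iv1': "s \<cdot> (iv s \<cdot> (s \<cdot> z)) = s \<cdot> z" by (metis assoc iv1)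
lemma iv1'': "s \<cdot> (iv s \<cdot> s) = s" by (metis assoc iv1)
lemma iv2': "iv s \<cdot> (s \<cdot> (iv s \<cdot> z)) = iv s \<cdot> z" by (metis assoc iv2)

lemma inE: "e \<in> idems m \<longleftrightarrow> e \<cdot> e = e"
  unfolding idems_def by simp

lemma vv: "iv (iv s) = s"
  using iv_uniq[of "iv s" s] iv1 iv2 by simp

lemma idl: "iv s \<cdot> s \<in> idems m"
  unfolding inE by (metis assoc iv2)

lemma idr: "s \<cdot> iv s \<in> idems m"
  unfolding inE by (metis assoc iv1)

lemma idem_comm': "e \<in> idems m \<Longrightarrow> f \<in> idems m \<Longrightarrow> e \<cdot> f = f \<cdot> e"
  using idem_comm inE by blast

lemma idem_prod': "e \<in> idems m \<Longrightarrow> f \<in> idems m \<Longrightarrow> e \<cdot> f \<in> idems m"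
  using idem_prod_idem inE by blast

lemma iv_mul: "iv (s \<cdot> t) = iv t \<cdot> iv s"
proof -
  have c: "(t \<cdot> iv t) \<cdot> (iv s \<cdot> s) = (iv s \<cdot> s) \<cdot> (t \<cdot> iv t)"
    using idem_comm' idl idr by blast
  have "s \<cdot> t \<cdot> (iv t \<cdot> iv s) \<cdot> (s \<cdot> t) = s \<cdot> ((t \<cdot> iv t) \<cdot> (iv s \<cdot> s)) \<cdot> t"
    by (simp add: assoc)
  also have "\<dots> = s \<cdot> ((iv s \<cdot> s) \<cdot> (t \<cdot> iv t)) \<cdot> t" using c by simp
  also have "\<dots> = (s \<cdot> iv s \<cdot> s) \<cdot> (t \<cdot> iv t \<cdot> t)" by (simp add: assoc)
  finally have 1: "s \<cdot> t \<cdot> (iv t \<cdot> iv s) \<cdot> (s \<cdot> t) = s \<cdot> t" using iv1 by simp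
  have "(iv t \<cdot> iv s) \<cdot> (s \<cdot> t) \<cdot> (iv t \<cdot> iv s) = iv t \<cdot> ((iv s \<cdot> s) \<cdot> (t \<cdot> iv t)) \<cdot> iv s"
    by (simp add: assoc)
  also have "\<dots> = iv t \<cdot> ((t \<cdot> iv t) \<cdot> (iv s \<cdot> s)) \<cdot> iv s" using c by simp
  also have "\<dots> = (iv t \<cdot> t \<cdot> iv t) \<cdot> (iv s \<cdot> s \<cdot> iv s)" by (simp add: assoc)
  finally have 2: "(iv t \<cdot> iv s) \<cdot> (s \<cdot> t) \<cdot> (iv t \<cdot> iv s) = iv t \<cdot> iv s" using iv2 by simp
  show ?thesis using iv_uniq[OF 1 2] by simp
qed

lemma ivE: "e \<in> idems m \<Longrightarrow> iv e = e"
  using idem_iv inE by blast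

lemma le_right: "intr_le m s t \<longleftrightarrow> s = t \<cdot> (iv s \<cdot> s)"
proof
  assume "intr_le m s t"
  then obtain e where e: "e \<in> idems m" and s: "s = t \<cdot> e" unfolding intr_le_def by blast
  have "iv s \<cdot> s = e \<cdot> (iv t \<cdot> t) \<cdot> e" using s iv_mul ivE[OF e] by (simp add: assoc)
  also have "\<dots> = (iv t \<cdot> t) \<cdot> (e \<cdot> e)" using idem_comm'[OF e idl] by (metis assoc)
  finally have "iv s \<cdot> s = (iv t \<cdot> t) \<cdot> e" using e inE by simp
  hence "t \<cdot> (iv s \<cdot> s) = (t \<cdot> iv t \<cdot> t) \<cdot> e" by (simp add: assoc)
  thus "s = t \<cdot> (iv s \<cdot> s)" using s iv1 by simp
next
  assume "s = t \<cdot> (iv s \<cdot> s)"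
  thus "intr_le m s t" unfolding intr_le_def using idl by blast
qed

lemma le_leftI: assumes f: "f \<in> idems m" and s: "s = f \<cdot> t" shows "intr_le m s t"
proof -
  have c: "(t \<cdot> iv t) \<cdot> f = f \<cdot> (t \<cdot> iv t)" using idem_comm' idr f by blast
  have ff: "f \<cdot> f = f" using f inE by simp
  have "t \<cdot> (iv t \<cdot> f \<cdot> t) = ((t \<cdot> iv t) \<cdot> f) \<cdot> t" by (simp add: assoc)
  also have "\<dots> = f \<cdot> (t \<cdot> iv t \<cdot> t)" using c by (simp add: assoc)
  finally have 1: "s = t \<cdot> (iv t \<cdot> f \<cdot> t)" using s iv1 by simp
  have "(iv t \<cdot> f \<cdot> t) \<cdot> (iv t \<cdot> f \<cdot> t) = iv t \<cdot> (f \<cdot> (t \<cdot> iv t)) \<cdot> f \<cdot> t"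
    by (simp add: assoc)
  also have "\<dots> = iv t \<cdot> ((t \<cdot> iv t) \<cdot> f \<cdot> f) \<cdot> t" by (simp only: c[symmetric], simp add: assoc)
  also have "\<dots> = iv t \<cdot> ((t \<cdot> iv t) \<cdot> (f \<cdot> f)) \<cdot> t" by (simp add: assoc)
  also have "\<dots> = (iv t \<cdot> t \<cdot> iv t) \<cdot> f \<cdot> t" using ff by (simp add: assoc)
  finally have "(iv t \<cdot> f \<cdot> t) \<in> idems m" using iv2 inE by simp
  thus ?thesis using 1 unfolding intr_le_def by blast
qed

lemma le_left: "intr_le m s t \<Longrightarrow> s = (s \<cdot> iv s) \<cdot> t"
proof -
  assume "intr_le m s t"
  then obtain e where e: "e \<in> idems m" and s: "s = t \<cdot> e" unfolding intr_le_def by blast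
  have ivs: "iv s = e \<cdot> iv t" using s iv_mul ivE[OF e] by simp
  have "(s \<cdot> iv s) \<cdot> t = t \<cdot> (e \<cdot> e) \<cdot> (iv t \<cdot> t)" using s ivs by (simp add: assoc)
  also have "\<dots> = t \<cdot> (iv t \<cdot> t) \<cdot> e" using e inE idem_comm'[OF e idl] by (simp add: assoc)
  finally show ?thesis using s iv1 by (metis assoc)
qed

lemma le_refl: "intr_le m s s"
  using le_right iv1 by (simp add: assoc)

lemma le_trans: "intr_le m s t \<Longrightarrow> intr_le m t u \<Longrightarrow> intr_le m s u"
  unfolding intr_le_def by (metis assoc idem_prod')

lemma le_antisym: assumes "intr_le m s t" "intr_le m t s" shows "s = t"
proof -
  obtain e where e: "e \<in> idems m" and s: "s = t \<cdot> e" using assms unfolding intr_le_def by blast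
  obtain f where f: "f \<in> idems m" and t: "t = s \<cdot> f" using assms unfolding intr_le_def by blast
  have t2: "t = t \<cdot> (e \<cdot> f)" using s t by (metis assoc)
  have "t \<cdot> e = t \<cdot> (e \<cdot> f) \<cdot> e" using t2 by simp
  also have "\<dots> = t \<cdot> (e \<cdot> f)"
  proof -
    have "(e \<cdot> f) \<cdot> e = (e \<cdot> e) \<cdot> f" using idem_comm'[OF e f] by (metis assoc)
    thus ?thesis using e inE by (metis assoc)
  qed
  finally show ?thesis using s t2 by simp
qed

lemma le_mul_right: "intr_le m s t \<Longrightarrow> intr_le m (s \<cdot> a) (t \<cdot> a)"
  using le_left le_leftI idr by (metis assoc)

lemma le_ivmono: assumes "intr_le m s t" shows "intr_le m (iv s \<cdot> s) (iv t \<cdot> t)"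
proof -
  obtain e where e: "e \<in> idems m" and s: "s = t \<cdot> e" using assms unfolding intr_le_def by blast
  have "iv s \<cdot> s = e \<cdot> (iv t \<cdot> t) \<cdot> e" using s iv_mul ivE[OF e] by (simp add: assoc)
  also have "\<dots> = (iv t \<cdot> t) \<cdot> (e \<cdot> e)" using idem_comm'[OF e idl] by (metis assoc)
  finally have "iv s \<cdot> s = (iv t \<cdot> t) \<cdot> e" using e inE by simp
  thus ?thesis unfolding intr_le_def using e by blast
qed

lemma le_idem: "t \<in> idems m \<Longrightarrow> intr_le m s t \<Longrightarrow> s \<in> idems m"
  unfolding intr_le_def using idem_prod' by blast

lemma idem_le: "e \<in> idems m \<Longrightarrow> f \<in> idems m \<Longrightarrow> intr_le m e f \<longleftrightarrow> e = f \<cdot> e"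
  unfolding intr_le_def by (metis assoc inE)

lemma sup_unique_idem:
  assumes X: "X \<subseteq> idems m" and x: "is_sup_in (intr_le m) (idems m) X x"
    and y: "is_sup_in (intr_le m) UNIV X y"
  shows "y = x"
proof -
  have xE: "x \<in> idems m" using x unfolding is_sup_in_def by blast
  have "intr_le m y x" using x y unfolding is_sup_in_def by blast
  hence yE: "y \<in> idems m" using le_idem xE by blast
  have "intr_le m x y" using x y yE unfolding is_sup_in_def by blast
  thus ?thesis using \<open>intr_le m y x\<close> le_antisym by blast
qed

lemma supE_to_UNIV:
  assumes mir: "mirror_semigroup m" and X: "X \<subseteq> idems m" and dir: "directed_by (intr_le m) X"
    and x: "is_sup_in (intr_le m) (idems m) X x"
  shows "is_sup_in (intr_le m) UNIV X x"
proof -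
  obtain y where y: "is_sup_in (intr_le m) UNIV X y"
    using mir X dir x unfolding mirror_semigroup_def by blast
  thus ?thesis using sup_unique_idem[OF X x y] by simp
qed

lemma dir_image:
  assumes dir: "directed_by (intr_le m) D"
    and mono: "\<And>a b. a \<in> D \<Longrightarrow> b \<in> D \<Longrightarrow> intr_le m a b \<Longrightarrow> intr_le m (f a) (f b)"
  shows "directed_by (intr_le m) (f ` D)"
  using dir unfolding directed_by_def
  by (smt (verit, best) image_iff image_is_empty mono)

lemma le_mul_idem: "e \<in> idems m \<Longrightarrow> intr_le m (s \<cdot> e) s"
  unfolding intr_le_def by blast

lemma rev_dir:
  assumes mir: "mirror_semigroup m" and mc: "meet_continuous m"
    and dir: "directed_by (intr_le m) D" and sx: "is_sup_in (intr_le m) UNIV D x"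
  shows "is_sup_in (intr_le m) UNIV ((\<lambda>d. d \<cdot> s) ` D) (x \<cdot> s)"
proof -
  have dle: "intr_le m d x" if "d \<in> D" for d using sx that unfolding is_sup_in_def by blast
  have xle: "intr_le m x u" if "\<forall>d\<in>D. intr_le m d u" for u
    using sx that unfolding is_sup_in_def by blast
  define \<Delta> where "\<Delta> = (\<lambda>d. iv d \<cdot> d) ` D"
  have \<Delta>E: "\<Delta> \<subseteq> idems m" unfolding \<Delta>_def using idl by blast
  have \<Delta>dir: "directed_by (intr_le m) \<Delta>" unfolding \<Delta>_def
    by (rule dir_image[OF dir]) (rule le_ivmono)
  have sup\<Delta>: "is_sup_in (intr_le m) (idems m) \<Delta> (iv x \<cdot> x)"
    unfolding is_sup_in_def
  proof (intro conjI ballI impI)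
    show "iv x \<cdot> x \<in> idems m" by (rule idl)
    show "intr_le m y (iv x \<cdot> x)" if "y \<in> \<Delta>" for y
      using that le_ivmono dle unfolding \<Delta>_def by blast
    fix g assume gE: "g \<in> idems m" and ub: "\<forall>y\<in>\<Delta>. intr_le m y g"
    have "intr_le m d (x \<cdot> g)" if dD: "d \<in> D" for d
    proof -
      have d1: "d = x \<cdot> (iv d \<cdot> d)" using dle[OF dD] le_right by blast
      have "intr_le m (iv d \<cdot> d) g" using ub dD unfolding \<Delta>_def by blast
      hence "iv d \<cdot> d = g \<cdot> (iv d \<cdot> d)" using idem_le[OF idl gE] by blast
      hence "d = x \<cdot> g \<cdot> (iv d \<cdot> d)" using d1 by (metis assoc)
      thus ?thesis unfolding intr_le_def using idl by blast
    qed
    hence "intr_le m x (x \<cdot> g)" using xle by blast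
    hence xg: "x \<cdot> g = x" using le_mul_idem[OF gE] le_antisym by blast
    have "iv x \<cdot> x = (iv x \<cdot> x) \<cdot> g" using xg by (metis assoc)
    also have "\<dots> = g \<cdot> (iv x \<cdot> x)" using idem_comm'[OF idl gE] .
    finally show "intr_le m (iv x \<cdot> x) g" using idem_le[OF idl gE] by blast
  qed
  define \<epsilon> where "\<epsilon> = s \<cdot> iv s"
  have \<epsilon>E: "\<epsilon> \<in> idems m" unfolding \<epsilon>_def by (rule idr)
  have supe: "is_sup_in (intr_le m) (idems m) ((\<lambda>d. d \<cdot> \<epsilon>) ` \<Delta>) (iv x \<cdot> x \<cdot> \<epsilon>)"
    using mc \<Delta>E \<Delta>dir sup\<Delta> \<epsilon>E unfolding meet_continuous_def by blast
  define y where "y = x \<cdot> s"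
  define h where "h = iv y \<cdot> y"
  define F where "F = (\<lambda>d. iv (d \<cdot> s) \<cdot> (d \<cdot> s)) ` D"
  have hE: "h \<in> idems m" unfolding h_def by (rule idl)
  have FE: "F \<subseteq> idems m" unfolding F_def using idl by blast
  have Fdir: "directed_by (intr_le m) F" unfolding F_def
    by (rule dir_image[OF dir]) (intro le_ivmono le_mul_right)
  have hform: "h = iv s \<cdot> (iv x \<cdot> x) \<cdot> s" unfolding h_def y_def by (simp add: iv_mul assoc)
  have supF: "is_sup_in (intr_le m) (idems m) F h"
    unfolding is_sup_in_def
  proof (intro conjI ballI impI)
    show "h \<in> idems m" by (rule hE)
    show "intr_le m f h" if "f \<in> F" for f
      using that le_ivmono le_mul_right dle unfolding F_def h_def y_def by blast
    fix g assume gE: "g \<in> idems m" and ub: "\<forall>f\<in>F. intr_le m f g"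
    have gg: "g \<cdot> g = g" using gE inE by simp
    define q where "q = s \<cdot> g \<cdot> iv s"
    have cg: "g \<cdot> (iv s \<cdot> s) = (iv s \<cdot> s) \<cdot> g" using idem_comm'[OF gE idl] .
    have qE: "q \<in> idems m"
    proof -
      have "q \<cdot> q = s \<cdot> (g \<cdot> (iv s \<cdot> s)) \<cdot> g \<cdot> iv s" unfolding q_def by (simp add: assoc)
      also have "\<dots> = (s \<cdot> iv s \<cdot> s) \<cdot> (g \<cdot> g) \<cdot> iv s" using cg by (simp add: assoc)
      finally show ?thesis using iv1 gg inE unfolding q_def by simp
    qed
    have "intr_le m (f \<cdot> \<epsilon>) q" if "f \<in> \<Delta>" for f
    proof -
      obtain d where dD: "d \<in> D" and f: "f = iv d \<cdot> d" using \<open>f \<in> \<Delta>\<close> unfolding \<Delta>_def by blast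
      have fE: "f \<in> idems m" using f idl by simp
      have "iv (d \<cdot> s) \<cdot> (d \<cdot> s) \<in> F" using dD unfolding F_def by blast
      hence "intr_le m (iv s \<cdot> f \<cdot> s) g" using ub f by (simp add: iv_mul assoc)
      moreover have "iv s \<cdot> f \<cdot> s \<in> idems m"
        using f idl[of "d \<cdot> s"] by (simp add: iv_mul assoc)
      ultimately have 1: "iv s \<cdot> f \<cdot> s = g \<cdot> (iv s \<cdot> f \<cdot> s)" using idem_le gE by blast
      have cf: "f \<cdot> \<epsilon> = \<epsilon> \<cdot> f" using idem_comm'[OF fE \<epsilon>E] .
      have "q \<cdot> (f \<cdot> \<epsilon>) = s \<cdot> (g \<cdot> (iv s \<cdot> f \<cdot> s)) \<cdot> iv s"
        unfolding q_def \<epsilon>_def by (simp add: assoc)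
      also have "\<dots> = s \<cdot> iv s \<cdot> (f \<cdot> \<epsilon>)" using 1 unfolding \<epsilon>_def by (simp add: assoc)
      also have "\<dots> = \<epsilon> \<cdot> (\<epsilon> \<cdot> f)" using cf unfolding \<epsilon>_def by simp
      also have "\<dots> = f \<cdot> \<epsilon>" using cf \<epsilon>E inE by (metis assoc)
      finally have "f \<cdot> \<epsilon> = q \<cdot> (f \<cdot> \<epsilon>)" by simp
      thus ?thesis using idem_le[OF idem_prod'[OF fE \<epsilon>E] qE] by blast
    qed
    hence "intr_le m (iv x \<cdot> x \<cdot> \<epsilon>) q" using supe qE unfolding is_sup_in_def by blast
    hence X: "iv x \<cdot> x \<cdot> \<epsilon> = q \<cdot> (iv x \<cdot> x \<cdot> \<epsilon>)"
      using idem_le[OF idem_prod'[OF idl \<epsilon>E] qE] by blast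
    have "h = iv s \<cdot> (iv x \<cdot> x \<cdot> \<epsilon>) \<cdot> s"
      unfolding hform \<epsilon>_def by (simp add: assoc iv2' iv1'')
    also have "\<dots> = iv s \<cdot> (q \<cdot> (iv x \<cdot> x \<cdot> \<epsilon>)) \<cdot> s" using X by simp
    also have "\<dots> = (iv s \<cdot> s) \<cdot> g \<cdot> (iv s \<cdot> (iv x \<cdot> x \<cdot> \<epsilon>) \<cdot> s)"
      unfolding q_def by (simp add: assoc)
    also have "\<dots> = (iv s \<cdot> s) \<cdot> g \<cdot> h"
      unfolding hform \<epsilon>_def by (simp add: assoc iv2' iv1'')
    also have "\<dots> = g \<cdot> ((iv s \<cdot> s) \<cdot> h)" using cg by (metis assoc)
    also have "(iv s \<cdot> s) \<cdot> h = h" unfolding hform by (simp add: assoc iv2' iv1'')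
    finally show "intr_le m h g" using idem_le[OF hE gE] by simp
  qed
  have supFU: "is_sup_in (intr_le m) UNIV F h" using supE_to_UNIV[OF mir FE Fdir supF] .
  show ?thesis unfolding is_sup_in_def
  proof (intro conjI ballI impI)
    show "x \<cdot> s \<in> UNIV" by simp
    show "intr_le m z (x \<cdot> s)" if "z \<in> (\<lambda>d. d \<cdot> s) ` D" for z
      using that dle le_mul_right by blast
    fix u assume ub: "\<forall>z\<in>(\<lambda>d. d \<cdot> s) ` D. intr_le m z u"
    define p where "p = iv y \<cdot> u"
    have "intr_le m f p" if fF: "f \<in> F" for f
    proof -
      obtain d where dD: "d \<in> D" and f: "f = iv (d \<cdot> s) \<cdot> (d \<cdot> s)" using fF unfolding F_def by blast
      have fE: "f \<in> idems m" using f idl by simp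
      have 1: "d \<cdot> s = u \<cdot> f" using ub dD f le_right by blast
      have 2: "d \<cdot> s = y \<cdot> f" using dle[OF dD] le_mul_right f le_right unfolding y_def by blast
      have "intr_le m f h" using supF fF unfolding is_sup_in_def by blast
      hence 3: "f = h \<cdot> f" using idem_le[OF fE hE] by blast
      have "p \<cdot> f = iv y \<cdot> (u \<cdot> f)" unfolding p_def by (simp add: assoc)
      also have "\<dots> = h \<cdot> f" using 1 2 unfolding h_def by (simp add: assoc)
      finally have "f = p \<cdot> f" using 3 by simp
      thus ?thesis using le_leftI[OF fE] by (metis fE intr_le_def)
    qed
    hence "intr_le m h p" using supFU unfolding is_sup_in_def by blast
    hence "h = p \<cdot> (iv h \<cdot> h)" using le_right by blast
    hence hp: "h = iv y \<cdot> u \<cdot> h" using ivE[OF hE] hE inE unfolding p_def by simp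
    define t where "t = u \<cdot> h"
    have ivt: "iv t = h \<cdot> iv u" unfolding t_def using iv_mul ivE[OF hE] by simp
    have "h = iv h" using ivE[OF hE] by simp
    also have "\<dots> = h \<cdot> iv u \<cdot> y" using hp iv_mul vv ivE[OF hE] by (metis assoc)
    finally have hq: "h = h \<cdot> iv u \<cdot> y" .
    have yh: "y \<cdot> h = y" unfolding h_def using iv1 by (simp add: assoc)
    have "y = (y \<cdot> iv y) \<cdot> t" unfolding t_def using hp yh by (metis assoc)
    hence le1: "intr_le m y t" using le_leftI[OF idr] by blast
    have hh: "h \<cdot> h = h" using hE inE by simp
    have "t = (t \<cdot> iv t) \<cdot> y" unfolding ivt unfolding t_def using hq hh by (metis assoc)
    hence le2: "intr_le m t y" using le_leftI[OF idr] by blast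
    have "y = t" using le_antisym le1 le2 by blast
    moreover have "intr_le m t u" unfolding t_def using le_mul_idem[OF hE] .
    ultimately show "intr_le m (x \<cdot> s) u" unfolding y_def by simp
  qed
qed

end

theorem proposition4p1:
  fixes m :: "'a \<Rightarrow> 'a \<Rightarrow> 'a"
  assumes "inverse_semigroup m"
    and "mirror_semigroup m"
  shows "sep_scott_continuous m \<longleftrightarrow> meet_continuous m"
proof -
  interpret invsg m by (rule invsg.intro) (rule assms(1))
  show ?thesis
  proof
    assume ssc: "sep_scott_continuous m"
    show "meet_continuous m" unfolding meet_continuous_def
    proof (intro allI impI)
      fix \<Delta> x e
      assume H: "\<Delta> \<subseteq> idems m \<and> directed_by (intr_le m) \<Delta> \<and> is_sup_in (intr_le m) (idems m) \<Delta> x \<and> e \<in> idems m"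
      have xE: "x \<in> idems m" using H unfolding is_sup_in_def by blast
      have "is_sup_in (intr_le m) UNIV \<Delta> x" using supE_to_UNIV assms(2) H by blast
      hence S: "is_sup_in (intr_le m) UNIV ((\<lambda>d. m d e) ` \<Delta>) (m x e)"
        using ssc H unfolding sep_scott_continuous_def by blast
      have "m x e \<in> idems m" using idem_prod' xE H by blast
      thus "is_sup_in (intr_le m) (idems m) ((\<lambda>d. m d e) ` \<Delta>) (m x e)"
        using S unfolding is_sup_in_def by blast
    qed
  next
    assume "meet_continuous m"
    thus "sep_scott_continuous m" unfolding sep_scott_continuous_def
      using rev_dir assms(2) by blast
  qed
qed

end
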